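(* Let $\mathcal{K}\subseteq\mathbb{R}\cup\{\pm\infty\}$ have nonzero Lebesgue measure, let $\varpi:\mathcal{K}\to\mathbb{R}_{\geq 0}$ be Lebesgue integrable with only countably (finitely or infinitely) many zeros, and let $d\in\mathbb{N}$. Let $\mathbf{f}(\cdot)=\mathrm{Col}_{i=1}^d f_i(\cdot)\in\mathbb{L}^2_{\varpi}(\mathcal{K};\mathbb{R}^d)$ satisfy $$\int_{\mathcal{K}}\varpi(\tau)\mathbf{f}(\tau)\mathbf{f}^\top(\tau)\,d\tau\succ 0 .$$ For $n\in\mathbb{N}$ define $F(\tau)=\mathbf{f}(\tau)\otimes I_n\in\mathbb{R}^{dn\times n}$ and the matrix $\mathsf{F}\in\mathbb{R}^{d\times d}$ by $\mathsf{F}^{-1}=\int_{\mathcal{K}}\varpi(\tau)\mathbf{f}(\tau)\mathbf{f}^\top(\tau)\,d\tau$. Then for all $\mathbf{x}(\cdot)\in\mathbb{L}^2_{\varpi}(\mathcal{K};\mathbb{R}^n)$ and all symmetric $U\succeq 0$ in $\mathbb{R}^{n\times n}$, $$\int_{\mathcal{K}}\varpi(\tau)\mathbf{x}^\top(\tau)U\mathbf{x}(\tau)\,d\tau\;\geq\;\boldsymbol{\vartheta}^\top(\mathsf{F}\otimes U)\boldsymbol{\vartheta},\qquad \boldsymbol{\vartheta}:=\int_{\mathcal{K}}\varpi(\tau)F(\tau)\mathbf{x}(\tau)\,d\tau\in\mathbb{R}^{dn}.$$ Moreover (optimality), if $U\succ 0$, then for every $\boldsymbol{\omega}\in\mathbb{R}^{dn}$,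 $$2\boldsymbol{\vartheta}^\top(I_d\otimes U)\boldsymbol{\omega}-\boldsymbol{\omega}^\top(\mathsf{F}^{-1}\otimes U)\boldsymbol{\omega}\;\leq\;\boldsymbol{\vartheta}^\top(\mathsf{F}\otimes U)\boldsymbol{\vartheta},$$ with equality for $\boldsymbol{\omega}=(\mathsf{F}\otimes I_n)\boldsymbol{\vartheta}$; here each left-hand side is a lower bound for $\int_{\mathcal{K}}\varpi\,\mathbf{x}^\top U\mathbf{x}\,d\tau$ (obtained from $\int_{\mathcal{K}}\varpi(\tau)(\mathbf{x}(\tau)-F^\top(\tau)\boldsymbol{\omega})^\top U(\mathbf{x}(\tau)-F^\top(\tau)\boldsymbol{\omega})\,d\tau\ge 0$), so the bound above is the largest among them.
   Context: For $m\in\mathbb{N}$, $\mathbb{L}^2_{\varpi}(\mathcal{K};\mathbb{R}^m)$ denotes the set of Lebesgue integrable functions $\phi:\mathcal{K}\to\mathbb{R}^m$ with $\int_{\mathcal{K}}\varpi(\tau)\phi^\top(\tau)\phi(\tau)\,d\tau<\infty$. $\mathrm{Col}_{i=1}^d f_i$ denotes the column vector $[f_1,\dots,f_d]^\top$; $\otimes$ is the Kronecker product and $I_n$ the $n\times n$ identity. *)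

theory Defs
  imports "HOL-Analysis.Analysis"
begin

text \<open>Kronecker product of matrices; the row/column index of the product is the pair
  (outer index, inner index), i.e. lexicographic block structure.\<close>
definition kron :: "real^'b^'a \<Rightarrow> real^'d^'c \<Rightarrow> real^('b \<times> 'd)^('a \<times> 'c)" where
  "kron A B = (\<chi> p q. A $ fst p $ fst q * B $ snd p $ snd q)"

text \<open>Kronecker product of a column vector v (a d x 1 matrix) with a matrix B;
  the singleton column index is dropped.\<close>
definition kron_col :: "real^'a \<Rightarrow> real^'c^'b \<Rightarrow> real^'c^('a \<times> 'b)" where
  "kron_col v B = (\<chi> p k. v $ fst p * B $ snd p $ k)"

definition outer :: "real^'a \<Rightarrow> real^'b \<Rightarrow> real^'b^'a" where
  "outer u v = (\<chi> i j. u $ i * v $ j)"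

definition pos_def :: "real^'n^'n \<Rightarrow> bool" where
  "pos_def A \<longleftrightarrow> (\<forall>v. v \<noteq> 0 \<longrightarrow> v \<bullet> (A *v v) > 0)"

definition pos_semidef :: "real^'n^'n \<Rightarrow> bool" where
  "pos_semidef A \<longleftrightarrow> (\<forall>v. v \<bullet> (A *v v) \<ge> 0)"

definition L2w :: "real set \<Rightarrow> (real \<Rightarrow> real) \<Rightarrow> (real \<Rightarrow> real^'m) \<Rightarrow> bool" where
  "L2w K w \<phi> \<longleftrightarrow> set_borel_measurable lebesgue K \<phi> \<and>
     set_integrable lebesgue K (\<lambda>t. w t * (\<phi> t \<bullet> \<phi> t))"

end

theory Submission
  imports Defs
begin


lemma outer_nth[simp]: "outer u v $ i $ j = u $ i * v $ j"
  by (simp add: outer_def)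

lemma kron_nth[simp]: "kron A B $ p $ q = A $ fst p $ fst q * B $ snd p $ snd q"
  by (simp add: kron_def)

lemma kron_col_nth[simp]: "kron_col v B $ p $ k = v $ fst p * B $ snd p $ k"
  by (simp add: kron_col_def)

lemma sum_prod_UNIV:
  "(\<Sum>p\<in>(UNIV::('a::finite \<times> 'b::finite) set). g p) = (\<Sum>i\<in>UNIV. \<Sum>k\<in>UNIV. g (i,k))"
proof -
  have "(\<Sum>i\<in>UNIV. \<Sum>k\<in>UNIV. g (i,k)) = (\<Sum>(i,k)\<in>(UNIV::'a set) \<times> (UNIV::'b set). g (i,k))"
    by (rule sum.cartesian_product)
  then show ?thesis by simp
qed

lemma kron_mult: "kron A B ** kron C D = kron (A ** C) (B ** D)"
  by (simp add: vec_eq_iff matrix_matrix_mult_def sum_prod_UNIV sum_product algebra_simps)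

lemma inner_mat_transpose: "(u::real^'n) \<bullet> (M *v v) = v \<bullet> (transpose M *v u)"
  by (metis dot_lmul_matrix inner_commute vector_transpose_matrix)

lemma transpose_kron: "transpose (kron A B) = kron (transpose A) (transpose B)"
  by (simp add: vec_eq_iff transpose_def)

lemma sum_axis_expand: "(\<Sum>i\<in>UNIV. axis i (x $ i)) = x"
  by (simp add: vec_eq_iff axis_def)

lemma bounded_linear_axis: "bounded_linear (axis i :: 'a::euclidean_space \<Rightarrow> 'a^'n)"
proof -
  have "linear (axis i :: 'a::euclidean_space \<Rightarrow> 'a^'n)"
    by (rule linearI) (simp_all add: vec_eq_iff axis_def)
  then show ?thesis by (simp add: linear_conv_bounded_linear)
qed

lemma integrable_vec_components:
  fixes f :: "'x \<Rightarrow> 'a::euclidean_space^'n"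
  assumes "\<And>i. integrable M (\<lambda>t. f t $ i)"
  shows "integrable M f"
proof -
  have "integrable M (\<lambda>t. \<Sum>i\<in>UNIV. axis i (f t $ i))"
    by (rule Bochner_Integration.integrable_sum, rule integrable_bounded_linear[OF bounded_linear_axis assms])
  then show ?thesis by (simp add: sum_axis_expand)
qed


lemma comp_sq_le: "(p::real^'m) $ i ^ 2 \<le> p \<bullet> p"
proof -
  have "\<bar>p $ i\<bar> \<le> norm p" by (rule component_le_norm_cart)
  from power_mono[OF this abs_ge_zero, of 2] have "\<bar>p $ i\<bar>^2 \<le> norm p ^ 2" .
  then show ?thesis by (simp add: power2_norm_eq_inner)
qed

lemma pw_bound:
  fixes p :: "real^'m" and q :: "real^'p"
  assumes "w \<ge> 0"
  shows "\<bar>w * (p $ i * q $ j)\<bar> \<le> \<bar>w * (p \<bullet> p) + w * (q \<bullet> q)\<bar>"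
proof -
  have "\<bar>p $ i * q $ j\<bar> \<le> p $ i ^ 2 + q $ j ^ 2"
  proof -
    have "0 \<le> (\<bar>p $ i\<bar> - \<bar>q $ j\<bar>)^2" by simp
    then have "2 * (\<bar>p $ i\<bar> * \<bar>q $ j\<bar>) \<le> \<bar>p $ i\<bar>^2 + \<bar>q $ j\<bar>^2"
      by (simp add: power2_diff)
    moreover have "0 \<le> \<bar>p $ i\<bar> * \<bar>q $ j\<bar>" by simp
    ultimately show ?thesis using power2_abs[of "p $ i"] power2_abs[of "q $ j"] unfolding abs_mult by linarith
  qed
  also have "\<dots> \<le> p \<bullet> p + q \<bullet> q" using comp_sq_le[of p i] comp_sq_le[of q j] by simp
  finally have h: "\<bar>p $ i * q $ j\<bar> \<le> p \<bullet> p + q \<bullet> q" .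
  have "\<bar>w * (p $ i * q $ j)\<bar> = w * \<bar>p $ i * q $ j\<bar>" using assms by (simp add: abs_mult)
  also have "\<dots> \<le> w * (p \<bullet> p + q \<bullet> q)" using h assms by (simp add: mult_left_mono)
  also have "\<dots> \<le> \<bar>w * (p \<bullet> p) + w * (q \<bullet> q)\<bar>" by (simp add: algebra_simps)
  finally show ?thesis .
qed

lemma int_comp:
  fixes a :: "real \<Rightarrow> real^'m" and b :: "real \<Rightarrow> real^'p"
  assumes a: "L2w K w a" and b: "L2w K w b" and wi: "set_integrable lebesgue K w"
    and wn: "\<forall>t\<in>K. w t \<ge> 0"
  shows "integrable lebesgue (\<lambda>t. indicator K t * (w t * (a t $ i * b t $ j)))"
proof -
  have ma: "(\<lambda>t. indicator K t *\<^sub>R a t) \<in> borel_measurable lebesgue"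
    using a by (simp add: L2w_def set_borel_measurable_def)
  have mb: "(\<lambda>t. indicator K t *\<^sub>R b t) \<in> borel_measurable lebesgue"
    using b by (simp add: L2w_def set_borel_measurable_def)
  have mw: "(\<lambda>t. indicator K t * w t) \<in> borel_measurable lebesgue"
    using wi unfolding set_integrable_def by (simp add: borel_measurable_integrable)
  have mai: "(\<lambda>t. (indicator K t *\<^sub>R a t) $ i) \<in> borel_measurable lebesgue"
    by (rule borel_measurable_continuous_on[OF _ ma]) (intro linear_continuous_on bounded_linear_vec_nth)
  have mbj: "(\<lambda>t. (indicator K t *\<^sub>R b t) $ j) \<in> borel_measurable lebesgue"
    by (rule borel_measurable_continuous_on[OF _ mb]) (intro linear_continuous_on bounded_linear_vec_nth)
  have ia: "integrable lebesgue (\<lambda>t. indicator K t * (w t * (a t \<bullet> a t)))"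
    using a by (simp add: L2w_def set_integrable_def)
  have ib: "integrable lebesgue (\<lambda>t. indicator K t * (w t * (b t \<bullet> b t)))"
    using b by (simp add: L2w_def set_integrable_def)
  have eq: "(\<lambda>t. indicator K t * (w t * (a t $ i * b t $ j))) =
     (\<lambda>t. (indicator K t * w t) * ((indicator K t *\<^sub>R a t) $ i) * ((indicator K t *\<^sub>R b t) $ j))"
    by (auto simp: indicator_def fun_eq_iff)
  show ?thesis
  proof (rule Bochner_Integration.integrable_bound[OF Bochner_Integration.integrable_add[OF ia ib]])
    show "(\<lambda>t. indicator K t * (w t * (a t $ i * b t $ j))) \<in> borel_measurable lebesgue"
      unfolding eq by (rule borel_measurable_times[OF borel_measurable_times[OF mw mai] mbj])
    show "AE t in lebesgue. norm (indicator K t * (w t * (a t $ i * b t $ j)))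
      \<le> norm (indicator K t * (w t * (a t \<bullet> a t)) + indicator K t * (w t * (b t \<bullet> b t)))"
    proof (rule AE_I2)
      fix t
      show "norm (indicator K t * (w t * (a t $ i * b t $ j)))
      \<le> norm (indicator K t * (w t * (a t \<bullet> a t)) + indicator K t * (w t * (b t \<bullet> b t)))"
        using pw_bound[of "w t" "a t" i "b t" j] wn by (cases "t \<in> K") auto
    qed
  qed
qed

lemma int_outer:
  fixes a :: "real \<Rightarrow> real^'m" and b :: "real \<Rightarrow> real^'p"
  assumes a: "L2w K w a" and b: "L2w K w b" and wi: "set_integrable lebesgue K w"
    and wn: "\<forall>t\<in>K. w t \<ge> 0"
  shows "integrable lebesgue (\<lambda>t. indicator K t *\<^sub>R (w t *\<^sub>R outer (a t) (b t)))"
proof (intro integrable_vec_components)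
  fix i j
  have "(\<lambda>t. (indicator K t *\<^sub>R (w t *\<^sub>R outer (a t) (b t))) $ i $ j) =
        (\<lambda>t. indicator K t * (w t * (a t $ i * b t $ j)))" by (simp add: mult.assoc)
  then show "integrable lebesgue (\<lambda>t. (indicator K t *\<^sub>R (w t *\<^sub>R outer (a t) (b t))) $ i $ j)"
    using int_comp[OF a b wi wn, of i j] by simp
qed


definition lU :: "real^'n^'n \<Rightarrow> real^'n^'n \<Rightarrow> real" where
  "lU U M = (\<Sum>k\<in>UNIV. \<Sum>l\<in>UNIV. U $ k $ l * M $ k $ l)"

definition L1 :: "real^'n^'d \<Rightarrow> real^('d \<times> 'n)" where
  "L1 M = (\<chi> p. M $ fst p $ snd p)"

definition Ym :: "real^('d \<times> 'n) \<Rightarrow> real^'d \<Rightarrow> real^'n" where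
  "Ym \<omega> p = (\<chi> l. \<Sum>i\<in>UNIV. p $ i * \<omega> $ (i, l))"

lemma mat1_nth: "(mat 1 :: real^'n^'n) $ i $ j = (if i = j then 1 else 0)"
  by (simp add: mat_def)

lemma kronI_mv: "(kron (mat 1) U *v \<omega>) $ (i, k) = (\<Sum>l\<in>UNIV. U $ k $ l * \<omega> $ (i, l))"
proof -
  have h: "\<And>ia. (\<Sum>ka\<in>UNIV. (if i = ia then 1 else 0) * U $ k $ ka * \<omega> $ (ia, ka)) =
     (if i = ia then \<Sum>ka\<in>UNIV. U $ k $ ka * \<omega> $ (ia,ka) else 0)" by simp
  show ?thesis by (simp add: matrix_vector_mult_def sum_prod_UNIV mat1_nth h)
qed

lemma PI1: "(q::real^'n) \<bullet> (U *v q) = lU U (outer q q)"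
  by (simp add: lU_def inner_vec_def matrix_vector_mult_def sum_distrib_left mult_ac)

lemma PI2: "(q::real^'n) \<bullet> (U *v Ym \<omega> p) = L1 (outer p q) \<bullet> (kron (mat 1) U *v \<omega>)"
proof -
  have "L1 (outer p q) \<bullet> (kron (mat 1) U *v \<omega>) =
     (\<Sum>i\<in>UNIV. \<Sum>k\<in>UNIV. \<Sum>l\<in>UNIV. p $ i * q $ k * U $ k $ l * \<omega> $ (i, l))"
    by (simp add: inner_vec_def sum_prod_UNIV kronI_mv L1_def sum_distrib_left mult_ac)
  also have "\<dots> = (\<Sum>k\<in>UNIV. \<Sum>i\<in>UNIV. \<Sum>l\<in>UNIV. p $ i * q $ k * U $ k $ l * \<omega> $ (i, l))"
    by (rule sum.swap)
  also have "\<dots> = (\<Sum>k\<in>UNIV. \<Sum>l\<in>UNIV. \<Sum>i\<in>UNIV. p $ i * q $ k * U $ k $ l * \<omega> $ (i, l))"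
    by (rule sum.cong[OF refl], rule sum.swap)
  also have "\<dots> = q \<bullet> (U *v Ym \<omega> p)"
    by (simp add: inner_vec_def matrix_vector_mult_def Ym_def sum_distrib_left mult_ac)
  finally show ?thesis by simp
qed

lemma PI3: "Ym \<omega> p \<bullet> (U *v Ym \<omega> p) = \<omega> \<bullet> (kron (outer p p) U *v \<omega>)"
proof -
  define g where "g k l a b = p$a * p$b * U$k$l * \<omega>$(a,l) * \<omega>$(b,k)" for k l a b
  have L: "Ym \<omega> p \<bullet> (U *v Ym \<omega> p) = (\<Sum>k\<in>UNIV. \<Sum>l\<in>UNIV. \<Sum>a\<in>UNIV. \<Sum>b\<in>UNIV. g k l a b)"
    by (simp add: g_def inner_vec_def matrix_vector_mult_def sum_prod_UNIV Ym_def sum_distrib_left sum_distrib_right mult_ac)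
  have R: "\<omega> \<bullet> (kron (outer p p) U *v \<omega>) = (\<Sum>b\<in>UNIV. \<Sum>k\<in>UNIV. \<Sum>a\<in>UNIV. \<Sum>l\<in>UNIV. g k l a b)"
    by (simp add: g_def inner_vec_def matrix_vector_mult_def sum_prod_UNIV Ym_def sum_distrib_left sum_distrib_right mult_ac)
  have "(\<Sum>k\<in>UNIV. \<Sum>l\<in>UNIV. \<Sum>a\<in>UNIV. \<Sum>b\<in>UNIV. g k l a b) = (\<Sum>k\<in>UNIV. \<Sum>l\<in>UNIV. \<Sum>b\<in>UNIV. \<Sum>a\<in>UNIV. g k l a b)"
    by (rule sum.cong[OF refl], rule sum.cong[OF refl], rule sum.swap)
  also have "\<dots> = (\<Sum>k\<in>UNIV. \<Sum>b\<in>UNIV. \<Sum>l\<in>UNIV. \<Sum>a\<in>UNIV. g k l a b)"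
    by (rule sum.cong[OF refl], rule sum.swap)
  also have "\<dots> = (\<Sum>k\<in>UNIV. \<Sum>b\<in>UNIV. \<Sum>a\<in>UNIV. \<Sum>l\<in>UNIV. g k l a b)"
    by (rule sum.cong[OF refl], rule sum.cong[OF refl], rule sum.swap)
  also have "\<dots> = (\<Sum>b\<in>UNIV. \<Sum>k\<in>UNIV. \<Sum>a\<in>UNIV. \<Sum>l\<in>UNIV. g k l a b)"
    by (rule sum.swap)
  finally show ?thesis using L R by simp
qed


lemma kron_add_left: "kron (A + B) U = kron A U + kron B U"
  by (simp add: vec_eq_iff algebra_simps)

lemma kron_scale_left: "kron (c *\<^sub>R A) U = c *\<^sub>R kron A U"
  by (simp add: vec_eq_iff algebra_simps)

lemma bl_lU: "bounded_linear (lU U)"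
proof -
  have "linear (lU U)"
    by (rule linearI) (simp_all add: lU_def algebra_simps sum.distrib sum_distrib_left)
  then show ?thesis by (simp add: linear_conv_bounded_linear)
qed

lemma bl_l2: "bounded_linear (\<lambda>M. L1 M \<bullet> c)"
proof -
  have "linear (\<lambda>M. L1 M \<bullet> c)"
    by (rule linearI) (simp_all add: L1_def inner_vec_def algebra_simps sum.distrib sum_distrib_left)
  then show ?thesis by (simp add: linear_conv_bounded_linear)
qed

lemma bl_l3: "bounded_linear (\<lambda>M. \<omega> \<bullet> (kron M U *v \<omega>))"
proof -
  have "linear (\<lambda>M. \<omega> \<bullet> (kron M U *v \<omega>))"
    by (rule linearI) (simp_all add: kron_add_left kron_scale_left matrix_vector_mult_add_rdistrib
        inner_add_right scaleR_matrix_vector_assoc[symmetric])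
  then show ?thesis by (simp add: linear_conv_bounded_linear)
qed

lemma bl_L1: "bounded_linear L1"
proof -
  have "linear L1"
    by (rule linearI) (simp_all add: L1_def vec_eq_iff)
  then show ?thesis by (simp add: linear_conv_bounded_linear)
qed

lemma bl_transpose: "bounded_linear (transpose :: real^'n^'m \<Rightarrow> real^'m^'n)"
proof -
  have "linear (transpose :: real^'n^'m \<Rightarrow> real^'m^'n)"
    by (rule linearI) (simp_all add: transpose_def vec_eq_iff)
  then show ?thesis by (simp add: linear_conv_bounded_linear)
qed

lemma int_lin:
  fixes ell :: "'a::euclidean_space \<Rightarrow> real"
  assumes bl: "bounded_linear ell" and int: "integrable lebesgue (\<lambda>t. indicator K t *\<^sub>R (w t *\<^sub>R M t))"
  shows "integrable lebesgue (\<lambda>t. indicator K t * (w t * ell (M t)))"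
    and "lebesgue_integral lebesgue (\<lambda>t. indicator K t * (w t * ell (M t))) =
         ell (lebesgue_integral lebesgue (\<lambda>t. indicator K t *\<^sub>R (w t *\<^sub>R M t)))"
proof -
  have eq: "(\<lambda>t. indicator K t * (w t * ell (M t))) = (\<lambda>t. ell (indicator K t *\<^sub>R (w t *\<^sub>R M t)))"
    using linear_cmul[OF bounded_linear.linear[OF bl]] by (simp add: mult.assoc)
  show "integrable lebesgue (\<lambda>t. indicator K t * (w t * ell (M t)))"
    unfolding eq by (rule integrable_bounded_linear[OF bl int])
  show "lebesgue_integral lebesgue (\<lambda>t. indicator K t * (w t * ell (M t))) =
         ell (lebesgue_integral lebesgue (\<lambda>t. indicator K t *\<^sub>R (w t *\<^sub>R M t)))"
    unfolding eq by (rule integral_bounded_linear[OF bl int])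
qed

lemma PQ:
  fixes q :: "real^'n" and p :: "real^'d"
  assumes U_sym: "transpose U = U"
  shows "(q - Ym \<omega> p) \<bullet> (U *v (q - Ym \<omega> p)) =
    lU U (outer q q) - 2 * (L1 (outer p q) \<bullet> (kron (mat 1) U *v \<omega>)) + \<omega> \<bullet> (kron (outer p p) U *v \<omega>)"
proof -
  have s: "Ym \<omega> p \<bullet> (U *v q) = q \<bullet> (U *v Ym \<omega> p)"
    using inner_mat_transpose[of "Ym \<omega> p" U q] U_sym by simp
  have e: "(q - Ym \<omega> p) \<bullet> (U *v (q - Ym \<omega> p)) = q \<bullet> (U *v q) - q \<bullet> (U *v Ym \<omega> p)
     - Ym \<omega> p \<bullet> (U *v q) + Ym \<omega> p \<bullet> (U *v Ym \<omega> p)"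
    by (simp add: inner_diff_left inner_diff_right matrix_vector_mult_diff_distrib)
  show ?thesis
    using e s PI1[of q U] PI2[of q U \<omega> p] PI3[of \<omega> p U] by linarith
qed

lemma GEN:
  fixes a :: "real \<Rightarrow> real^'d" and b :: "real \<Rightarrow> real^'n" and U :: "real^'n^'n"
    and \<omega> :: "real^('d \<times> 'n)"
  assumes a: "L2w K w a" and b: "L2w K w b" and wi: "set_integrable lebesgue K w"
    and wn: "\<forall>t\<in>K. w t \<ge> 0" and U_sym: "transpose U = U" and U_psd: "pos_semidef U"
  shows "0 \<le> lU U (LINT t:K|lebesgue. w t *\<^sub>R outer (b t) (b t))
     - 2 * (L1 (LINT t:K|lebesgue. w t *\<^sub>R outer (a t) (b t)) \<bullet> (kron (mat 1) U *v \<omega>))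
     + \<omega> \<bullet> (kron (LINT t:K|lebesgue. w t *\<^sub>R outer (a t) (a t)) U *v \<omega>)"
proof -
  let ?c = "kron (mat 1) U *v \<omega>"
  note ibb = int_outer[OF b b wi wn] and iab = int_outer[OF a b wi wn] and iaa = int_outer[OF a a wi wn]
  note l1 = int_lin[OF bl_lU[of U] ibb] and l2 = int_lin[OF bl_l2[of ?c] iab]
    and l3 = int_lin[OF bl_l3[of \<omega> U] iaa]
  have pw: "indicator K t * (w t * ((b t - Ym \<omega> (a t)) \<bullet> (U *v (b t - Ym \<omega> (a t))))) =
      indicator K t * (w t * lU U (outer (b t) (b t))) - 2 * (indicator K t * (w t * (L1 (outer (a t) (b t)) \<bullet> ?c)))
      + indicator K t * (w t * (\<omega> \<bullet> (kron (outer (a t) (a t)) U *v \<omega>)))" for t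
    unfolding PQ[OF U_sym] by (simp add: algebra_simps)
  have "0 \<le> lebesgue_integral lebesgue (\<lambda>t. indicator K t * (w t * ((b t - Ym \<omega> (a t)) \<bullet> (U *v (b t - Ym \<omega> (a t))))))"
  proof (rule Bochner_Integration.integral_nonneg)
    fix t
    show "0 \<le> indicator K t * (w t * ((b t - Ym \<omega> (a t)) \<bullet> (U *v (b t - Ym \<omega> (a t)))))"
      using wn U_psd unfolding pos_semidef_def by (cases "t \<in> K") auto
  qed
  also have "\<dots> = lebesgue_integral lebesgue (\<lambda>t. indicator K t * (w t * lU U (outer (b t) (b t))) - 2 * (indicator K t * (w t * (L1 (outer (a t) (b t)) \<bullet> ?c)))
      + indicator K t * (w t * (\<omega> \<bullet> (kron (outer (a t) (a t)) U *v \<omega>))))"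
    by (simp only: pw)
  also have "\<dots> = lU U (LINT t:K|lebesgue. w t *\<^sub>R outer (b t) (b t))
     - 2 * (L1 (LINT t:K|lebesgue. w t *\<^sub>R outer (a t) (b t)) \<bullet> ?c)
     + \<omega> \<bullet> (kron (LINT t:K|lebesgue. w t *\<^sub>R outer (a t) (a t)) U *v \<omega>)"
    using l1 l2 l3 unfolding set_lebesgue_integral_def by simp
  finally show ?thesis .
qed


lemma Kc_L1: "kron_col v (mat 1) *v y = L1 (outer v y)"
proof -
  have "(kron_col v (mat 1) *v y) $ p = L1 (outer v y) $ p" for p
  proof -
    have h: "(\<Sum>k\<in>UNIV. v $ fst p * (mat 1 :: real^'b^'b) $ snd p $ k * y $ k) =
       (\<Sum>k\<in>UNIV. if snd p = k then v $ fst p * y $ k else 0)"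
      by (rule sum.cong[OF refl]) (simp add: mat1_nth)
    show ?thesis using h by (simp add: matrix_vector_mult_def L1_def)
  qed
  then show ?thesis by (simp add: vec_eq_iff)
qed

lemma L2w_zero: "L2w K w (\<lambda>t. 0 :: real^'n)"
  by (simp add: L2w_def set_borel_measurable_def set_integrable_def)

lemma outer_zero_right [simp]: "outer u 0 = 0"
  by (simp add: outer_def vec_eq_iff)

lemma inv_of_posdef:
  assumes "pos_def (G::real^'n^'n)"
  shows "G ** matrix_inv G = mat 1"
proof -
  have "\<forall>x. G *v x = 0 \<longrightarrow> x = 0"
    using assms unfolding pos_def_def by (metis inner_zero_right less_irrefl)
  then have "\<exists>B. B ** G = mat 1" by (simp add: matrix_left_invertible_ker)
  then have "invertible G" by (simp add: invertible_left_inverse)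
  then show ?thesis unfolding invertible_def matrix_inv_def by (rule someI_ex[THEN conjunct1])
qed

lemma inner_sym_kron:
  assumes "transpose A = A" "transpose U = U"
  shows "u \<bullet> (kron A U *v v) = v \<bullet> (kron A U *v u)"
  using inner_mat_transpose[of u "kron A U" v] assms by (simp add: transpose_kron)

theorem theorem1:
  fixes K :: "real set" and w :: "real \<Rightarrow> real"
    and f :: "real \<Rightarrow> real^'d" and x :: "real \<Rightarrow> real^'n" and U :: "real^'n^'n"
  assumes K_meas: "K \<in> sets lebesgue"
    and K_pos: "emeasure lebesgue K \<noteq> 0"
    and w_nonneg: "\<forall>t\<in>K. w t \<ge> 0"
    and w_int: "set_integrable lebesgue K w"
    and w_zeros: "countable {t\<in>K. w t = 0}"
    and f_L2: "L2w K w f"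
    and f_gram: "pos_def (LINT t:K|lebesgue. w t *\<^sub>R outer (f t) (f t))"
    and x_L2: "L2w K w x"
    and U_sym: "transpose U = U"
    and U_psd: "pos_semidef U"
  shows
    "let Finv = (LINT t:K|lebesgue. w t *\<^sub>R outer (f t) (f t));
         Fm = matrix_inv Finv;
         \<theta> = (LINT t:K|lebesgue. w t *\<^sub>R (kron_col (f t) (mat 1) *v x t));
         J = (LINT t:K|lebesgue. w t * (x t \<bullet> (U *v x t)))
     in \<theta> \<bullet> (kron Fm U *v \<theta>) \<le> J
      \<and> (pos_def U \<longrightarrow>
          (\<forall>\<omega>. 2 * (\<theta> \<bullet> (kron (mat 1) U *v \<omega>)) - \<omega> \<bullet> (kron Finv U *v \<omega>)
                 \<le> \<theta> \<bullet> (kron Fm U *v \<theta>)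
             \<and> 2 * (\<theta> \<bullet> (kron (mat 1) U *v \<omega>)) - \<omega> \<bullet> (kron Finv U *v \<omega>) \<le> J)
          \<and> (let \<omega> = kron Fm (mat 1) *v \<theta> in
               2 * (\<theta> \<bullet> (kron (mat 1) U *v \<omega>)) - \<omega> \<bullet> (kron Finv U *v \<omega>)
                 = \<theta> \<bullet> (kron Fm U *v \<theta>)))"
proof -
  define G where "G = (LINT t:K|lebesgue. w t *\<^sub>R outer (f t) (f t))"
  define Mfx where "Mfx = (LINT t:K|lebesgue. w t *\<^sub>R outer (f t) (x t))"
  define Mxx where "Mxx = (LINT t:K|lebesgue. w t *\<^sub>R outer (x t) (x t))"
  define \<theta> where "\<theta> = (LINT t:K|lebesgue. w t *\<^sub>R (kron_col (f t) (mat 1) *v x t))"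
  define J where "J = (LINT t:K|lebesgue. w t * (x t \<bullet> (U *v x t)))"
  define Fm where "Fm = matrix_inv G"
  define B where "B = kron (mat 1 :: real^'d^'d) U"
  define C where "C = kron G U"
  define \<omega>s where "\<omega>s = kron Fm (mat 1 :: real^'n^'n) *v \<theta>"
  note iff = int_outer[OF f_L2 f_L2 w_int w_nonneg]
  note ifx = int_outer[OF f_L2 x_L2 w_int w_nonneg]
  note ixx = int_outer[OF x_L2 x_L2 w_int w_nonneg]
  have th: "\<theta> = L1 Mfx"
  proof -
    have "\<theta> = lebesgue_integral lebesgue (\<lambda>t. L1 (indicator K t *\<^sub>R (w t *\<^sub>R outer (f t) (x t))))"
      unfolding \<theta>_def set_lebesgue_integral_def
      by (simp add: Kc_L1 linear_cmul[OF bounded_linear.linear[OF bl_L1]])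
    also have "\<dots> = L1 Mfx"
      unfolding Mfx_def set_lebesgue_integral_def by (rule integral_bounded_linear[OF bl_L1 ifx])
    finally show ?thesis .
  qed
  have Jx: "J = lU U Mxx"
  proof -
    have "J = lebesgue_integral lebesgue (\<lambda>t. indicator K t * (w t * lU U (outer (x t) (x t))))"
      unfolding J_def set_lebesgue_integral_def by (simp add: PI1)
    also have "\<dots> = lU U Mxx"
      unfolding Mxx_def set_lebesgue_integral_def by (rule int_lin(2)[OF bl_lU ixx])
    finally show ?thesis .
  qed
  have Gsym: "transpose G = G"
  proof -
    have "transpose G = lebesgue_integral lebesgue (\<lambda>t. transpose (indicator K t *\<^sub>R (w t *\<^sub>R outer (f t) (f t))))"
      unfolding G_def set_lebesgue_integral_def by (rule integral_bounded_linear[OF bl_transpose iff, symmetric])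
    also have "\<dots> = G"
      unfolding G_def set_lebesgue_integral_def
      by (rule arg_cong[where f="lebesgue_integral lebesgue"]) (simp add: fun_eq_iff vec_eq_iff transpose_def mult.commute)
    finally show ?thesis .
  qed
  have GFm: "G ** Fm = mat 1" unfolding Fm_def G_def by (rule inv_of_posdef[OF f_gram])
  have gen: "0 \<le> J - 2 * (\<theta> \<bullet> (B *v \<omega>)) + \<omega> \<bullet> (C *v \<omega>)" for \<omega>
    using GEN[OF f_L2 x_L2 w_int w_nonneg U_sym U_psd, of \<omega>]
    unfolding Jx th B_def C_def G_def Mfx_def Mxx_def by simp
  have Cpsd: "0 \<le> \<omega> \<bullet> (C *v \<omega>)" for \<omega>
    using GEN[OF f_L2 L2w_zero w_int w_nonneg U_sym U_psd, of \<omega>]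
    unfolding C_def G_def by (simp add: lU_def L1_def set_lebesgue_integral_def inner_vec_def)
  have CB: "C *v \<omega>s = B *v \<theta>"
    unfolding C_def B_def \<omega>s_def matrix_vector_mul_assoc kron_mult GFm by simp
  have BF: "B *v \<omega>s = kron Fm U *v \<theta>"
    unfolding B_def \<omega>s_def matrix_vector_mul_assoc kron_mult by simp
  have Bsym: "u \<bullet> (B *v v) = v \<bullet> (B *v u)" for u v
    unfolding B_def by (rule inner_sym_kron) (simp_all add: U_sym)
  have Csym: "u \<bullet> (C *v v) = v \<bullet> (C *v u)" for u v
    unfolding C_def by (rule inner_sym_kron[OF Gsym U_sym])
  define a where "a = \<theta> \<bullet> (kron Fm U *v \<theta>)"
  have eq: "2 * (\<theta> \<bullet> (B *v \<omega>s)) - \<omega>s \<bullet> (C *v \<omega>s) = a"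
  proof -
    have "\<theta> \<bullet> (B *v \<omega>s) = a" unfolding a_def BF ..
    moreover have "\<omega>s \<bullet> (C *v \<omega>s) = \<theta> \<bullet> (B *v \<omega>s)" unfolding CB by (rule Bsym)
    ultimately show ?thesis by simp
  qed
  have opt: "2 * (\<theta> \<bullet> (B *v \<omega>)) - \<omega> \<bullet> (C *v \<omega>) \<le> a" for \<omega>
  proof -
    have e: "(\<omega> - \<omega>s) \<bullet> (C *v (\<omega> - \<omega>s)) = \<omega> \<bullet> (C *v \<omega>) - \<omega> \<bullet> (C *v \<omega>s) - \<omega>s \<bullet> (C *v \<omega>) + \<omega>s \<bullet> (C *v \<omega>s)"
      by (simp add: inner_diff_left inner_diff_right matrix_vector_mult_diff_distrib)
    have e1: "\<omega> \<bullet> (C *v \<omega>s) = \<theta> \<bullet> (B *v \<omega>)" unfolding CB by (rule Bsym)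
    have e2: "\<omega>s \<bullet> (C *v \<omega>) = \<omega> \<bullet> (C *v \<omega>s)" by (rule Csym)
    have e3: "\<omega>s \<bullet> (C *v \<omega>s) = a"
      using eq BF a_def by simp
    show ?thesis using Cpsd[of "\<omega> - \<omega>s"] e e1 e2 e3 by linarith
  qed
  have main: "a \<le> J \<and> (pos_def U \<longrightarrow>
          (\<forall>\<omega>. 2 * (\<theta> \<bullet> (B *v \<omega>)) - \<omega> \<bullet> (C *v \<omega>) \<le> a
             \<and> 2 * (\<theta> \<bullet> (B *v \<omega>)) - \<omega> \<bullet> (C *v \<omega>) \<le> J)
          \<and> 2 * (\<theta> \<bullet> (B *v \<omega>s)) - \<omega>s \<bullet> (C *v \<omega>s) = a)"
    using gen[of \<omega>s] eq opt gen by (smt (verit))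
  show ?thesis
    unfolding Let_def G_def[symmetric] \<theta>_def[symmetric] J_def[symmetric]
    using main unfolding a_def B_def C_def \<omega>s_def Fm_def by simp
qed

end
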